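(* For every $\epsilon>0$ there is $\epsilon'>0$ depending only on $\epsilon$ such that: if $f:\{0,1\}^n\to\{-1,1\}$ and $B$ is a symmetric $n\times n$ matrix over $\mathbb F_2$ with zero diagonal satisfying $\mathbb E_y\hat{f_y}^2(By)\ge\epsilon$, then there exists a quadratic polynomial function $g$ whose distance from $f$ is at most $\frac12-\epsilon'$.
   Context: $\{0,1\}^n$ is identified with $\mathbb F_2^n$. $\hat h(\alpha)=\mathbb E_z h(z)(-1)^{\langle\alpha,z\rangle}$; $f_y(x)=f(x)f(x+y)$; $y$ uniform. A quadratic polynomial function is $g=(-1)^{P}$ with $P$ an $n$-variate polynomial over $\mathbb F_2$ of degree at most $2$. Distance is the fraction of points where two functions differ. *)

theory Defs
  imports Main "HOL-Library.Function_Algebras" Complex_Main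
begin

text \<open>Points of F_2^n are encoded as subsets of {..<n} (indicator of the support).
  Addition is symmetric difference; the inner product <a,z> is the parity of card (a \<inter> z).\<close>

definition cube :: "nat \<Rightarrow> nat set set" where
  "cube n = Pow {..<n}"

definition vadd :: "nat set \<Rightarrow> nat set \<Rightarrow> nat set" where
  "vadd x y = (x - y) \<union> (y - x)"

definition chr :: "nat set \<Rightarrow> nat set \<Rightarrow> real" where
  "chr a z = (-1) ^ card (a \<inter> z)"

definition expect :: "nat \<Rightarrow> (nat set \<Rightarrow> real) \<Rightarrow> real" where
  "expect n h = (\<Sum>z\<in>cube n. h z) / 2 ^ n"

definition fourier :: "nat \<Rightarrow> (nat set \<Rightarrow> real) \<Rightarrow> nat set \<Rightarrow> real" where
  "fourier n h \<alpha> = expect n (\<lambda>z. h z * chr \<alpha> z)"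

definition deriv_fun :: "(nat set \<Rightarrow> real) \<Rightarrow> nat set \<Rightarrow> nat set \<Rightarrow> real" where
  "deriv_fun f y = (\<lambda>x. f x * f (vadd x y))"

text \<open>An n x n matrix over F_2 is a function B :: nat => nat => bool (entries for i,j < n).
  Matrix-vector product: (By)_i = sum_j B_ij y_j.\<close>
definition matvec :: "nat \<Rightarrow> (nat \<Rightarrow> nat \<Rightarrow> bool) \<Rightarrow> nat set \<Rightarrow> nat set" where
  "matvec n B y = {i. i < n \<and> odd (card {j \<in> y. j < n \<and> B i j})}"

text \<open>Polynomial of degree at most 2 over F_2 in n variables: by x_i^2 = x_i, its
  general form is  c + sum_i a_i x_i + sum_{i<j} q_ij x_i x_j.  Its value at x:\<close>
definition quad_poly_eval :: "nat \<Rightarrow> bool \<Rightarrow> (nat \<Rightarrow> bool) \<Rightarrow> (nat \<Rightarrow> nat \<Rightarrow> bool) \<Rightarrow> nat set \<Rightarrow> bool" where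
  "quad_poly_eval n c a q x =
     (c \<noteq> odd (card {i \<in> x. i < n \<and> a i} +
                card {(i, j). i \<in> x \<and> j \<in> x \<and> i < j \<and> j < n \<and> q i j}))"

definition quadratic_poly_fun :: "nat \<Rightarrow> (nat set \<Rightarrow> real) \<Rightarrow> bool" where
  "quadratic_poly_fun n g \<longleftrightarrow>
     (\<exists>c a q. \<forall>x\<in>cube n. g x = (if quad_poly_eval n c a q x then -1 else 1))"

definition dist_cube :: "nat \<Rightarrow> (nat set \<Rightarrow> real) \<Rightarrow> (nat set \<Rightarrow> real) \<Rightarrow> real" where
  "dist_cube n f g = real (card {x \<in> cube n. f x \<noteq> g x}) / 2 ^ n"

end

theory Submission
  imports Defs
begin


definition sg :: "bool \<Rightarrow> real" where "sg b = (if b then -1 else 1)"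

lemma cube_finite: "finite (cube n)" by (simp add: cube_def)
lemma cube_sub: "x \<in> cube n \<Longrightarrow> x \<subseteq> {..<n}" by (simp add: cube_def)
lemma cube_fin: "x \<in> cube n \<Longrightarrow> finite x" using cube_sub finite_subset by blast
lemma vadd_cube: "x \<in> cube n \<Longrightarrow> y \<in> cube n \<Longrightarrow> vadd x y \<in> cube n"
  by (auto simp: cube_def vadd_def)
lemma vadd_vadd: "vadd x (vadd x y) = y" by (auto simp: vadd_def)
lemma vadd_eq_empty: "vadd x y = {} \<longleftrightarrow> x = y" by (auto simp: vadd_def)
lemma matvec_cube: "matvec n B y \<in> cube n" by (auto simp: cube_def matvec_def)

lemma chr_prod: "finite a \<Longrightarrow> chr a z = (\<Prod>i\<in>a. sg (i \<in> z))"
proof -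
  assume fa: "finite a"
  have "a \<inter> z = {i\<in>a. i \<in> z}" by auto
  then have "chr a z = (\<Prod>i\<in>{i\<in>a. i \<in> z}. (-1::real))" by (simp add: chr_def)
  also have "\<dots> = (\<Prod>i\<in>a. if i \<in> z then -1 else 1)" by (rule prod.inter_filter[OF fa])
  also have "\<dots> = (\<Prod>i\<in>a. sg (i \<in> z))" by (simp add: sg_def)
  finally show ?thesis .
qed

lemma sg_xor: "sg (a \<noteq> b) = sg a * sg b" by (auto simp: sg_def)

lemma chr_vadd: "finite a \<Longrightarrow> chr a (vadd x z) = chr a x * chr a z"
proof -
  assume fa: "finite a"
  have "\<And>i. sg (i \<in> vadd x z) = sg (i\<in>x) * sg (i\<in>z)" by (auto simp: sg_def vadd_def)
  then show ?thesis by (simp add: chr_prod[OF fa] prod.distrib)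
qed

lemma chr_comm: "chr a z = chr z a" by (simp add: chr_def Int_commute)
lemma chr_sq: "chr a z * chr a z = 1" by (simp add: chr_def flip: power_add)
  
lemma orth_gen: "(\<Sum>\<alpha>\<in>cube n. chr \<alpha> z) = (if z \<inter> {..<n} = {} then 2^n else 0)"
proof (induction n)
  case 0
  then show ?case by (simp add: cube_def chr_def)
next
  case (Suc n)
  have P: "cube (Suc n) = cube n \<union> insert n ` cube n"
    by (simp add: cube_def lessThan_Suc Pow_insert)
  have D: "cube n \<inter> insert n ` cube n = {}" by (auto simp: cube_def)
  have I: "inj_on (insert n) (cube n)"
    by (rule inj_onI) (metis cube_sub insert_ident lessThan_iff less_irrefl subsetD)
  have C: "chr (insert n \<alpha>) z = chr \<alpha> z * sg (n \<in> z)" if "\<alpha> \<in> cube n" for \<alpha>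
  proof -
    have "finite \<alpha>" "n \<notin> \<alpha>" using cube_fin[OF that] cube_sub[OF that] by auto
    then show ?thesis by (simp add: chr_prod sg_def mult.commute)
  qed
  have "(\<Sum>\<alpha>\<in>cube (Suc n). chr \<alpha> z) = (\<Sum>\<alpha>\<in>cube n. chr \<alpha> z) + (\<Sum>\<alpha>\<in>insert n ` cube n. chr \<alpha> z)"
    unfolding P by (rule sum.union_disjoint) (use D cube_finite in auto)
  also have "(\<Sum>\<alpha>\<in>insert n ` cube n. chr \<alpha> z) = (\<Sum>\<alpha>\<in>cube n. chr \<alpha> z) * sg (n\<in>z)"
    by (simp add: sum.reindex[OF I] C sum_distrib_right)
  finally have E: "(\<Sum>\<alpha>\<in>cube (Suc n). chr \<alpha> z) = (\<Sum>\<alpha>\<in>cube n. chr \<alpha> z) * (1 + sg (n\<in>z))"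
    by (simp add: algebra_simps)
  have L: "z \<inter> {..<Suc n} = {} \<longleftrightarrow> z \<inter> {..<n} = {} \<and> n \<notin> z" by (auto simp: lessThan_Suc)
  show ?case unfolding E Suc.IH L by (simp add: sg_def)
qed

lemma orth: "z \<in> cube n \<Longrightarrow> (\<Sum>\<alpha>\<in>cube n. chr \<alpha> z) = (if z = {} then 2^n else 0)"
  using orth_gen[where n=n and z=z] cube_sub[where x=z and n=n] by (metis inf.absorb1)

lemma sum_vadd: "x \<in> cube n \<Longrightarrow> (\<Sum>y\<in>cube n. \<phi> (vadd x y)) = (\<Sum>y\<in>cube n. \<phi> y)"
  by (rule sum.reindex_bij_witness[where i="vadd x" and j="vadd x"]) (auto simp: vadd_vadd vadd_cube)


lemma parseval: "(\<Sum>\<alpha>\<in>cube n. (\<Sum>x\<in>cube n. \<phi> x * chr \<alpha> x)^2) = 2^n * (\<Sum>x\<in>cube n. (\<phi> x)^2)"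
proof -
  have S1: "(\<Sum>x\<in>cube n. \<phi> x * chr \<alpha> x)^2 = (\<Sum>x\<in>cube n. \<Sum>z\<in>cube n. \<phi> x * \<phi> z * chr \<alpha> (vadd x z))"
    if "\<alpha> \<in> cube n" for \<alpha>
  proof -
    have "(\<Sum>x\<in>cube n. \<phi> x * chr \<alpha> x)^2 = (\<Sum>x\<in>cube n. \<Sum>z\<in>cube n. (\<phi> x * chr \<alpha> x) * (\<phi> z * chr \<alpha> z))"
      unfolding power2_eq_square by (rule sum_product)
    also have "\<dots> = (\<Sum>x\<in>cube n. \<Sum>z\<in>cube n. \<phi> x * \<phi> z * chr \<alpha> (vadd x z))"
      using chr_vadd[OF cube_fin[OF that]] by (simp add: mult_ac)
    finally show ?thesis .
  qed
  have "(\<Sum>\<alpha>\<in>cube n. (\<Sum>x\<in>cube n. \<phi> x * chr \<alpha> x)^2)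
      = (\<Sum>\<alpha>\<in>cube n. \<Sum>x\<in>cube n. \<Sum>z\<in>cube n. \<phi> x * \<phi> z * chr \<alpha> (vadd x z))"
    by (rule sum.cong[OF refl]) (rule S1)
  also have "\<dots> = (\<Sum>x\<in>cube n. \<Sum>\<alpha>\<in>cube n. \<Sum>z\<in>cube n. \<phi> x * \<phi> z * chr \<alpha> (vadd x z))"
    by (rule sum.swap)
  also have "\<dots> = (\<Sum>x\<in>cube n. \<Sum>z\<in>cube n. \<Sum>\<alpha>\<in>cube n. \<phi> x * \<phi> z * chr \<alpha> (vadd x z))"
    by (rule sum.cong[OF refl]) (rule sum.swap)
  also have "\<dots> = (\<Sum>x\<in>cube n. \<Sum>z\<in>cube n. \<phi> x * \<phi> z * (\<Sum>\<alpha>\<in>cube n. chr \<alpha> (vadd x z)))"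
    by (simp only: sum_distrib_left)
  also have "\<dots> = (\<Sum>x\<in>cube n. \<Sum>z\<in>cube n. if x = z then \<phi> x * \<phi> x * 2^n else 0)"
    by (rule sum.cong[OF refl], rule sum.cong[OF refl]) (simp add: orth vadd_cube vadd_eq_empty)
  also have "\<dots> = (\<Sum>x\<in>cube n. \<phi> x * \<phi> x * 2^n)"
    by (rule sum.cong[OF refl]) (simp add: cube_finite)
  also have "\<dots> = 2^n * (\<Sum>x\<in>cube n. (\<phi> x)^2)"
    by (simp add: sum_distrib_left power2_eq_square mult_ac)
  finally show ?thesis .
qed


definition Qf :: "nat \<Rightarrow> (nat \<Rightarrow> nat \<Rightarrow> bool) \<Rightarrow> nat set \<Rightarrow> real" where
  "Qf n B x = (-1) ^ card {(i, j). i \<in> x \<and> j \<in> x \<and> i < j \<and> j < n \<and> B i j}"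

lemma sg_odd: "sg (odd k) = (-1) ^ k" by (simp add: sg_def)

lemma card_sg: "finite A \<Longrightarrow> (-1::real) ^ card {p\<in>A. P p} = (\<Prod>p\<in>A. sg (P p))"
proof -
  assume fA: "finite A"
  have "(-1::real) ^ card {p\<in>A. P p} = (\<Prod>p\<in>{p\<in>A. P p}. -1)" by simp
  also have "\<dots> = (\<Prod>p\<in>A. if P p then -1 else 1)" by (rule prod.inter_filter[OF fA])
  finally show ?thesis by (simp add: sg_def)
qed

lemma Qf_prod: "Qf n B x = (\<Prod>(i,j)\<in>{..<n}\<times>{..<n}. sg (i\<in>x \<and> j\<in>x \<and> i<j \<and> B i j))"
proof -
  have "{(i, j). i \<in> x \<and> j \<in> x \<and> i < j \<and> j < n \<and> B i j}
      = {p \<in> {..<n}\<times>{..<n}. (case p of (i,j) \<Rightarrow> i\<in>x \<and> j\<in>x \<and> i<j \<and> B i j)}" by auto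
  then have "Qf n B x = (\<Prod>p\<in>{..<n}\<times>{..<n}. sg (case p of (i,j) \<Rightarrow> i\<in>x \<and> j\<in>x \<and> i<j \<and> B i j))"
    unfolding Qf_def by (simp add: card_sg)
  then show ?thesis by (simp add: case_prod_unfold)
qed

lemma chr_matvec: "chr (matvec n B y) x = (\<Prod>(i,j)\<in>{..<n}\<times>{..<n}. sg (i\<in>x \<and> j\<in>y \<and> B i j))"
proof -
  have fm: "finite (matvec n B y)" by (simp add: matvec_def)
  have m: "matvec n B y = {i\<in>{..<n}. odd (card {j \<in> y. j < n \<and> B i j})}" by (auto simp: matvec_def)
  have "chr (matvec n B y) x = (\<Prod>i\<in>{i\<in>{..<n}. odd (card {j \<in> y. j < n \<and> B i j})}. sg (i \<in> x))"
    unfolding chr_prod[OF fm] by (simp only: m)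
  also have "\<dots> = (\<Prod>i\<in>{..<n}. if odd (card {j \<in> y. j < n \<and> B i j}) then sg (i \<in> x) else 1)"
    by (rule prod.inter_filter) simp
  also have "\<dots> = (\<Prod>i\<in>{..<n}. \<Prod>j\<in>{..<n}. sg (i\<in>x \<and> j\<in>y \<and> B i j))"
  proof (rule prod.cong[OF refl])
    fix i
    have e: "{j \<in> y. j < n \<and> B i j} = {j\<in>{..<n}. j\<in>y \<and> B i j}" by auto
    have "(\<Prod>j\<in>{..<n}. sg (j\<in>y \<and> B i j)) = sg (odd (card {j \<in> y. j < n \<and> B i j}))"
      unfolding e sg_odd by (rule card_sg[symmetric]) simp
    then show "(if odd (card {j \<in> y. j < n \<and> B i j}) then sg (i \<in> x) else 1) = (\<Prod>j\<in>{..<n}. sg (i\<in>x \<and> j\<in>y \<and> B i j))"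
      by (cases "i \<in> x") (auto simp: sg_def)
  qed
  also have "\<dots> = (\<Prod>(i,j)\<in>{..<n}\<times>{..<n}. sg (i\<in>x \<and> j\<in>y \<and> B i j))"
    by (rule prod.cartesian_product)
  finally show ?thesis .
qed

lemma Qf_polar:
  assumes sym: "\<forall>i<n. \<forall>j<n. B i j = B j i" and dg: "\<forall>i<n. \<not> B i i"
  shows "Qf n B (vadd x y) = Qf n B x * Qf n B y * chr (matvec n B y) x"
proof -
  let ?U = "{..<n}\<times>{..<n}"
  have pt: "sg (i\<in>vadd x y \<and> j\<in>vadd x y \<and> i<j \<and> B i j) =
     sg (i\<in>x \<and> j\<in>x \<and> i<j \<and> B i j) * sg (i\<in>y \<and> j\<in>y \<and> i<j \<and> B i j) *
     (sg (i\<in>x \<and> j\<in>y \<and> i<j \<and> B i j) * sg (i\<in>y \<and> j\<in>x \<and> i<j \<and> B i j))" for i j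
    by (cases "i\<in>x"; cases "i\<in>y"; cases "j\<in>x"; cases "j\<in>y"; cases "i<j"; cases "B i j")
       (simp_all add: sg_def vadd_def)
  have "Qf n B (vadd x y) = Qf n B x * Qf n B y *
     (\<Prod>(i,j)\<in>?U. sg (i\<in>x \<and> j\<in>y \<and> i<j \<and> B i j) * sg (i\<in>y \<and> j\<in>x \<and> i<j \<and> B i j))"
    unfolding Qf_prod pt by (simp add: prod.distrib case_prod_unfold)
  also have "(\<Prod>(i,j)\<in>?U. sg (i\<in>x \<and> j\<in>y \<and> i<j \<and> B i j) * sg (i\<in>y \<and> j\<in>x \<and> i<j \<and> B i j))
     = (\<Prod>(i,j)\<in>?U. sg (i\<in>x \<and> j\<in>y \<and> i<j \<and> B i j)) * (\<Prod>(i,j)\<in>?U. sg (i\<in>y \<and> j\<in>x \<and> i<j \<and> B i j))"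
    by (simp add: prod.distrib case_prod_unfold)
  also have "(\<Prod>(i,j)\<in>?U. sg (i\<in>y \<and> j\<in>x \<and> i<j \<and> B i j)) = (\<Prod>(i,j)\<in>?U. sg (i\<in>x \<and> j\<in>y \<and> j<i \<and> B i j))"
    by (rule prod.reindex_bij_witness[where i="\<lambda>(a,b). (b,a)" and j="\<lambda>(a,b). (b,a)"]) (use sym in \<open>auto simp: conj_ac\<close>)
  also have "(\<Prod>(i,j)\<in>?U. sg (i\<in>x \<and> j\<in>y \<and> i<j \<and> B i j)) * (\<Prod>(i,j)\<in>?U. sg (i\<in>x \<and> j\<in>y \<and> j<i \<and> B i j))
     = (\<Prod>(i,j)\<in>?U. sg (i\<in>x \<and> j\<in>y \<and> B i j))"
    unfolding prod.distrib[symmetric]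
  proof (rule prod.cong[OF refl])
    fix p assume "p \<in> ?U"
    then obtain i j where p: "p = (i,j)" "i<n" "j<n" by auto
    have "B i j \<Longrightarrow> i \<noteq> j" using dg p by auto
    then show "(case p of (i,j) \<Rightarrow> sg (i\<in>x \<and> j\<in>y \<and> i<j \<and> B i j)) * (case p of (i,j) \<Rightarrow> sg (i\<in>x \<and> j\<in>y \<and> j<i \<and> B i j))
       = (case p of (i,j) \<Rightarrow> sg (i\<in>x \<and> j\<in>y \<and> B i j))"
      unfolding p(1) by (cases "i<j"; cases "j<i"; cases "B i j") (auto simp: sg_def)
  qed
  finally show ?thesis by (simp add: chr_matvec)
qed


lemma autocorr:
  assumes "\<alpha> \<in> cube n"
  shows "(\<Sum>y\<in>cube n. (\<Sum>x\<in>cube n. h x * h (vadd x y)) * chr \<alpha> y) = (\<Sum>x\<in>cube n. h x * chr \<alpha> x)^2"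
proof -
  have fa: "finite \<alpha>" using cube_fin[OF assms] .
  have inner: "(\<Sum>y\<in>cube n. h (vadd x y) * chr \<alpha> y) = chr \<alpha> x * (\<Sum>y\<in>cube n. h y * chr \<alpha> y)"
    if x: "x \<in> cube n" for x
  proof -
    have "(\<Sum>y\<in>cube n. h (vadd x y) * chr \<alpha> y) = (\<Sum>y\<in>cube n. h (vadd x (vadd x y)) * chr \<alpha> (vadd x y))"
      using sum_vadd[OF x, of "\<lambda>y. h (vadd x y) * chr \<alpha> y"] by simp
    also have "\<dots> = (\<Sum>y\<in>cube n. chr \<alpha> x * (h y * chr \<alpha> y))"
      by (simp add: vadd_vadd chr_vadd[OF fa] mult_ac)
    finally show ?thesis by (simp add: sum_distrib_left)
  qed
  have "(\<Sum>y\<in>cube n. (\<Sum>x\<in>cube n. h x * h (vadd x y)) * chr \<alpha> y)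
     = (\<Sum>y\<in>cube n. \<Sum>x\<in>cube n. h x * (h (vadd x y) * chr \<alpha> y))"
    unfolding sum_distrib_right by (simp add: mult_ac)
  also have "\<dots> = (\<Sum>x\<in>cube n. \<Sum>y\<in>cube n. h x * (h (vadd x y) * chr \<alpha> y))"
    by (rule sum.swap)
  also have "\<dots> = (\<Sum>x\<in>cube n. h x * (\<Sum>y\<in>cube n. h (vadd x y) * chr \<alpha> y))"
    by (simp add: sum_distrib_left)
  also have "\<dots> = (\<Sum>x\<in>cube n. (h x * chr \<alpha> x) * (\<Sum>y\<in>cube n. h y * chr \<alpha> y))"
    by (rule sum.cong[OF refl]) (simp only: inner mult.assoc)
  also have "\<dots> = (\<Sum>x\<in>cube n. h x * chr \<alpha> x)^2"
    by (simp add: sum_distrib_right[symmetric] power2_eq_square)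
  finally show ?thesis .
qed

lemma sg_quad: "sg (c \<noteq> odd (a + b)) = sg c * ((-1::real)^a * (-1)^b)"
  by (cases c; cases "even a"; cases "even b") (simp_all add: sg_def)

lemma Qf_sq: "Qf n B x * Qf n B x = 1" by (simp add: Qf_def flip: power_add)

lemma card_cube: "card (cube n) = 2^n" by (simp add: cube_def card_Pow)

lemma main:
  fixes \<epsilon> :: real and f :: "nat set \<Rightarrow> real"
  assumes fv: "\<forall>x\<in>cube n. f x = 1 \<or> f x = -1"
    and sym: "\<forall>i<n. \<forall>j<n. B i j = B j i" and dg: "\<forall>i<n. \<not> B i i"
    and hyp: "expect n (\<lambda>y. (fourier n (deriv_fun f y) (matvec n B y))\<^sup>2) \<ge> \<epsilon>"
  shows "\<exists>g. quadratic_poly_fun n g \<and> dist_cube n f g \<le> 1/2 - \<epsilon>/2"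
proof -
  define N :: real where "N = 2^n"
  define C where "C = cube n"
  define Q where "Q = Qf n B"
  define h where "h x = f x * Q x" for x
  define c where "c y = (\<Sum>x\<in>C. h x * h (vadd x y))" for y
  define H where "H \<alpha> = (\<Sum>x\<in>C. h x * chr \<alpha> x)" for \<alpha>
  have Npos: "N > 0" by (simp add: N_def)
  have fC: "finite C" by (simp add: C_def cube_finite)
  have QQ: "Q x * Q x = 1" for x by (simp add: Q_def Qf_sq)
  have hh: "h x * h x = 1" if "x \<in> C" for x
  proof -
    have "f x * f x = 1" using fv that by (auto simp: C_def)
    then show ?thesis by (simp add: h_def mult_ac QQ)
  qed
  have step1: "fourier n (deriv_fun f y) (matvec n B y) = Q y * c y / N" if y: "y \<in> C" for y
  proof -
    have "f x * f (vadd x y) * chr (matvec n B y) x = Q y * (h x * h (vadd x y))" if x: "x \<in> C" for x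
    proof -
      have pol: "Q (vadd x y) = Q x * Q y * chr (matvec n B y) x"
        unfolding Q_def by (rule Qf_polar[OF sym dg])
      have "Q x * Q y * Q (vadd x y) = chr (matvec n B y) x"
        unfolding pol by (metis QQ mult.assoc mult.commute mult_1)
      then show ?thesis unfolding h_def by (metis mult.assoc mult.commute)
    qed
    then have "(\<Sum>x\<in>C. f x * f (vadd x y) * chr (matvec n B y) x) = Q y * c y"
      by (simp add: c_def sum_distrib_left)
    then show ?thesis
      by (simp add: fourier_def expect_def deriv_fun_def N_def C_def)
  qed
  have step2: "(\<Sum>y\<in>C. (c y)^2) \<ge> \<epsilon> * N^3"
  proof -
    have "expect n (\<lambda>y. (fourier n (deriv_fun f y) (matvec n B y))\<^sup>2) = (\<Sum>y\<in>C. (c y)^2 / N^2) / N"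
      unfolding expect_def C_def[symmetric] N_def[symmetric]
    proof (rule arg_cong[where f="\<lambda>s. s / N"], rule sum.cong[OF refl])
      fix y assume "y \<in> C"
      then show "(fourier n (deriv_fun f y) (matvec n B y))\<^sup>2 = (c y)^2 / N^2"
        by (simp add: step1 power2_eq_square power_divide) (metis QQ mult.assoc mult.left_commute mult_1)
    qed
    also have "\<dots> = (\<Sum>y\<in>C. (c y)^2) / N^3"
      by (simp add: sum_divide_distrib[symmetric] power3_eq_cube power2_eq_square)
    finally show ?thesis using hyp Npos by (simp add: pos_le_divide_eq)
  qed
  have step3: "(\<Sum>\<alpha>\<in>C. (H \<alpha>)^2 * (H \<alpha>)^2) = N * (\<Sum>y\<in>C. (c y)^2)"
  proof -
    have "(\<Sum>\<alpha>\<in>C. (H \<alpha>)^2 * (H \<alpha>)^2) = (\<Sum>\<alpha>\<in>C. (\<Sum>y\<in>C. c y * chr \<alpha> y)^2)"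
      by (rule sum.cong[OF refl]) (simp add: H_def c_def C_def autocorr power2_eq_square)
    also have "\<dots> = N * (\<Sum>y\<in>C. (c y)^2)"
      unfolding C_def N_def by (rule parseval)
    finally show ?thesis .
  qed
  have step4: "(\<Sum>\<alpha>\<in>C. (H \<alpha>)^2) = N * N"
  proof -
    have "(\<Sum>\<alpha>\<in>C. (H \<alpha>)^2) = N * (\<Sum>x\<in>C. (h x)^2)"
      unfolding H_def C_def N_def by (rule parseval)
    also have "(\<Sum>x\<in>C. (h x)^2) = (\<Sum>x\<in>C. 1)"
      by (rule sum.cong[OF refl]) (simp add: power2_eq_square hh)
    also have "\<dots> = N" by (simp add: C_def N_def card_cube)
    finally show ?thesis .
  qed
  have Cne: "C \<noteq> {}" by (auto simp: C_def cube_def)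
  obtain \<alpha>0 where a0: "\<alpha>0 \<in> C" "\<And>\<alpha>. \<alpha> \<in> C \<Longrightarrow> (H \<alpha>)^2 \<le> (H \<alpha>0)^2"
  proof -
    have "Max ((\<lambda>\<alpha>. (H \<alpha>)^2) ` C) \<in> (\<lambda>\<alpha>. (H \<alpha>)^2) ` C" using fC Cne by (intro Max_in) auto
    then obtain \<alpha>0 where "\<alpha>0 \<in> C" "(H \<alpha>0)^2 = Max ((\<lambda>\<alpha>. (H \<alpha>)^2) ` C)" by auto
    moreover have "\<And>\<alpha>. \<alpha> \<in> C \<Longrightarrow> (H \<alpha>)^2 \<le> Max ((\<lambda>\<alpha>. (H \<alpha>)^2) ` C)" using fC by (intro Max_ge) auto
    ultimately show ?thesis using that by metis
  qed
  have up: "(H \<alpha>0)^2 * (N * N) \<ge> \<epsilon> * (N * N * N * N)"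
  proof -
    have "\<epsilon> * (N * N * N * N) \<le> N * (\<Sum>y\<in>C. (c y)^2)"
      using step2 Npos by (simp add: power3_eq_cube mult_ac)
    also have "\<dots> = (\<Sum>\<alpha>\<in>C. (H \<alpha>)^2 * (H \<alpha>)^2)" using step3 by simp
    also have "\<dots> \<le> (\<Sum>\<alpha>\<in>C. (H \<alpha>0)^2 * (H \<alpha>)^2)"
      by (rule sum_mono, rule mult_right_mono) (simp_all add: a0(2))
    also have "\<dots> = (H \<alpha>0)^2 * (N * N)" by (simp add: sum_distrib_left[symmetric] step4)
    finally show ?thesis .
  qed
  define t where "t = \<bar>H \<alpha>0\<bar> / N"
  have t2: "t^2 \<ge> \<epsilon>"
  proof -
    have "(H \<alpha>0)^2 \<ge> \<epsilon> * (N * N)" using up Npos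
      by (smt (verit) mult.assoc mult_le_cancel_right_pos mult_pos_pos)
    then show ?thesis using Npos by (simp add: t_def power_divide pos_le_divide_eq power2_eq_square)
  qed
  have t1: "t \<le> 1"
  proof -
    have "(H \<alpha>0)^2 \<le> (\<Sum>\<alpha>\<in>C. (H \<alpha>)^2)" using a0(1) fC by (intro member_le_sum) auto
    then have "(H \<alpha>0)^2 \<le> N^2" using step4 by (simp add: power2_eq_square)
    then have "\<bar>H \<alpha>0\<bar> \<le> N" using Npos by (metis abs_le_square_iff abs_of_pos)
    then show ?thesis using Npos by (simp add: t_def)
  qed
  have tge: "t \<ge> \<epsilon>"
  proof -
    have "t \<ge> 0" using Npos by (simp add: t_def)
    then have "t^2 \<le> t" using t1 by (simp add: power2_eq_square mult_left_le)
    then show ?thesis using t2 by simp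
  qed
  define s where "s = sg (H \<alpha>0 < 0)"
  define g where "g x = (if quad_poly_eval n (H \<alpha>0 < 0) (\<lambda>i. i \<in> \<alpha>0) B x then -1 else (1::real))" for x
  have quad: "quadratic_poly_fun n g" unfolding quadratic_poly_fun_def g_def by blast
  have gx: "g x = s * chr \<alpha>0 x * Q x" if "x \<in> C" for x
  proof -
    have "\<alpha>0 \<inter> x = {i \<in> x. i < n \<and> i \<in> \<alpha>0}" using a0(1) cube_sub by (auto simp: C_def)
    then have e1: "chr \<alpha>0 x = (-1)^card {i \<in> x. i < n \<and> i \<in> \<alpha>0}" by (simp add: chr_def)
    have "g x = sg (quad_poly_eval n (H \<alpha>0 < 0) (\<lambda>i. i \<in> \<alpha>0) B x)" by (simp add: g_def sg_def)
    also have "\<dots> = s * ((-1)^card {i \<in> x. i < n \<and> i \<in> \<alpha>0} * Q x)"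
      unfolding quad_poly_eval_def sg_quad s_def Q_def Qf_def ..
    finally show ?thesis by (simp add: e1 mult_ac)
  qed
  have corr: "(\<Sum>x\<in>C. f x * g x) = \<bar>H \<alpha>0\<bar>"
  proof -
    have "(\<Sum>x\<in>C. f x * g x) = s * H \<alpha>0"
      by (simp add: H_def sum_distrib_left gx h_def mult_ac cong: sum.cong)
    then show ?thesis by (simp add: s_def sg_def)
  qed
  have pw: "f x * g x = 1 - 2 * (if f x \<noteq> g x then 1 else 0)" if "x \<in> C" for x
  proof -
    have "g x = 1 \<or> g x = -1" by (simp add: g_def)
    moreover have "f x = 1 \<or> f x = -1" using fv that by (auto simp: C_def)
    ultimately show ?thesis by auto
  qed
  have "(\<Sum>x\<in>C. f x * g x) = N - 2 * real (card {x\<in>C. f x \<noteq> g x})"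
  proof -
    have "(\<Sum>x\<in>C. f x * g x) = (\<Sum>x\<in>C. 1 - 2 * (if f x \<noteq> g x then 1 else 0))"
      by (rule sum.cong[OF refl]) (rule pw)
    also have "\<dots> = real (card C) - 2 * (\<Sum>x\<in>C. (if f x \<noteq> g x then 1 else 0))"
      by (simp add: sum_subtractf sum_distrib_left)
    also have "(\<Sum>x\<in>C. (if f x \<noteq> g x then 1 else 0)) = real (card {x\<in>C. f x \<noteq> g x})"
      using sum.inter_filter[OF fC, of "\<lambda>_. (1::real)" "\<lambda>x. f x \<noteq> g x", symmetric] by simp
    finally show ?thesis by (simp add: C_def N_def card_cube)
  qed
  then have "dist_cube n f g = 1/2 - t/2"
    using corr Npos by (simp add: dist_cube_def C_def[symmetric] N_def[symmetric] t_def field_simps)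
  then have "dist_cube n f g \<le> 1/2 - \<epsilon>/2" using tge by simp
  with quad show ?thesis by blast
qed


theorem corollary6p4:
  shows "\<forall>\<epsilon>::real. \<epsilon> > 0 \<longrightarrow> (\<exists>\<epsilon>'::real. \<epsilon>' > 0 \<and>
     (\<forall>(n::nat) (f :: nat set \<Rightarrow> real) (B :: nat \<Rightarrow> nat \<Rightarrow> bool).
        (\<forall>x\<in>cube n. f x = 1 \<or> f x = -1) \<longrightarrow>
        (\<forall>i<n. \<forall>j<n. B i j = B j i) \<longrightarrow>
        (\<forall>i<n. \<not> B i i) \<longrightarrow>
        expect n (\<lambda>y. (fourier n (deriv_fun f y) (matvec n B y))\<^sup>2) \<ge> \<epsilon> \<longrightarrow>
        (\<exists>g. quadratic_poly_fun n g \<and> dist_cube n f g \<le> 1/2 - \<epsilon>')))"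
proof (intro allI impI)
  fix \<epsilon> :: real assume "\<epsilon> > 0"
  then show "\<exists>\<epsilon>'::real. \<epsilon>' > 0 \<and>
     (\<forall>(n::nat) (f :: nat set \<Rightarrow> real) (B :: nat \<Rightarrow> nat \<Rightarrow> bool).
        (\<forall>x\<in>cube n. f x = 1 \<or> f x = -1) \<longrightarrow>
        (\<forall>i<n. \<forall>j<n. B i j = B j i) \<longrightarrow>
        (\<forall>i<n. \<not> B i i) \<longrightarrow>
        expect n (\<lambda>y. (fourier n (deriv_fun f y) (matvec n B y))\<^sup>2) \<ge> \<epsilon> \<longrightarrow>
        (\<exists>g. quadratic_poly_fun n g \<and> dist_cube n f g \<le> 1/2 - \<epsilon>'))"
    using main[where \<epsilon>=\<epsilon>] by (intro exI[of _ "\<epsilon>/2"]) auto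
qed

end
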